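(* Let $\Omega\subset\mathbb{R}^N$ be a bounded open set, $T>0$, $Q_T=(0,T)\times\Omega$, $p>1$, $\sigma\ge1$. Let $w\in L^p(0,T;W^{1,p}_0(\Omega))\cap C([0,T];L^\sigma(\Omega))$ with $\|w(0)\|_{L^\sigma(\Omega)}=0$, and suppose there are constants $c_0>0$, $\eta>0$, $m\ge p$ such that for every $0\le t\le T$, $$\sup_{s\in(0,t)}\|w(s)\|_{L^\sigma(\Omega)}^\sigma+\|w\|_{L^p(0,t;W^{1,p}_0(\Omega))}^p\le c_0\sup_{s\in(0,t)}\|w(s)\|_{L^\sigma(\Omega)}^\eta\,\|w\|_{L^p(0,t;W^{1,p}_0(\Omega))}^m.$$ Then $w\equiv0$ in $Q_T$. *)

theory Defs
  imports "HOL-Analysis.Analysis"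
begin

definition grad :: "('a::euclidean_space \<Rightarrow> real) \<Rightarrow> 'a \<Rightarrow> 'a" where
  "grad f x = (\<Sum>b\<in>Basis. frechet_derivative f (at x) b *\<^sub>R b)"

fun Ck :: "nat \<Rightarrow> ('a::euclidean_space \<Rightarrow> real) \<Rightarrow> bool" where
  "Ck 0 f = continuous_on UNIV f"
| "Ck (Suc k) f = (f differentiable_on UNIV \<and> continuous_on UNIV f \<and>
                   (\<forall>b\<in>Basis. Ck k (\<lambda>x. frechet_derivative f (at x) b)))"

definition test_fun :: "'a::euclidean_space set \<Rightarrow> ('a \<Rightarrow> real) \<Rightarrow> bool" where
  "test_fun \<Omega> \<phi> \<longleftrightarrow> (\<forall>k. Ck k \<phi>) \<and> compact (closure {x. \<phi> x \<noteq> 0})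
                      \<and> closure {x. \<phi> x \<noteq> 0} \<subseteq> \<Omega>"

definition in_Lq :: "real \<Rightarrow> 'a::euclidean_space set \<Rightarrow> ('a \<Rightarrow> real) \<Rightarrow> bool" where
  "in_Lq q \<Omega> f \<longleftrightarrow> f \<in> borel_measurable (lebesgue_on \<Omega>) \<and>
                      integrable (lebesgue_on \<Omega>) (\<lambda>x. \<bar>f x\<bar> powr q)"

definition Lnorm :: "real \<Rightarrow> 'a::euclidean_space set \<Rightarrow> ('a \<Rightarrow> real) \<Rightarrow> real" where
  "Lnorm q \<Omega> f = (\<integral>x. \<bar>f x\<bar> powr q \<partial>lebesgue_on \<Omega>) powr (1 / q)"

definition in_W0 :: "real \<Rightarrow> 'a::euclidean_space set \<Rightarrow> ('a \<Rightarrow> real) \<Rightarrow> ('a \<Rightarrow> 'a) \<Rightarrow> bool" where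
  "in_W0 p \<Omega> u G \<longleftrightarrow> in_Lq p \<Omega> u \<and> G \<in> borel_measurable (lebesgue_on \<Omega>) \<and>
     integrable (lebesgue_on \<Omega>) (\<lambda>x. norm (G x) powr p) \<and>
     (\<exists>\<phi>::nat \<Rightarrow> 'a \<Rightarrow> real. (\<forall>k. test_fun \<Omega> (\<phi> k)) \<and>
        (\<lambda>k. Lnorm p \<Omega> (\<lambda>x. \<phi> k x - u x)) \<longlonglongrightarrow> 0 \<and>
        (\<lambda>k. Lnorm p \<Omega> (\<lambda>x. norm (grad (\<phi> k) x - G x))) \<longlonglongrightarrow> 0)"

definition W0norm :: "real \<Rightarrow> 'a::euclidean_space set \<Rightarrow> ('a \<Rightarrow> 'a) \<Rightarrow> real" where
  "W0norm p \<Omega> G = Lnorm p \<Omega> (\<lambda>x. norm (G x))"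

definition in_LpW0 :: "real \<Rightarrow> real \<Rightarrow> 'a::euclidean_space set \<Rightarrow> (real \<Rightarrow> 'a \<Rightarrow> real)
                        \<Rightarrow> (real \<Rightarrow> 'a \<Rightarrow> 'a) \<Rightarrow> bool" where
  "in_LpW0 p T \<Omega> w g \<longleftrightarrow>
     (\<lambda>z. w (fst z) (snd z)) \<in> borel_measurable (lebesgue_on ({0<..<T} \<times> \<Omega>)) \<and>
     (\<lambda>z. g (fst z) (snd z)) \<in> borel_measurable (lebesgue_on ({0<..<T} \<times> \<Omega>)) \<and>
     (AE t in lebesgue_on {0<..<T}. in_W0 p \<Omega> (w t) (g t)) \<and>
     integrable (lebesgue_on {0<..<T}) (\<lambda>t. W0norm p \<Omega> (g t) powr p)"

definition LpW0norm :: "real \<Rightarrow> real \<Rightarrow> 'a::euclidean_space set \<Rightarrow> (real \<Rightarrow> 'a \<Rightarrow> 'a) \<Rightarrow> real" where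
  "LpW0norm p t \<Omega> g = (\<integral>s. W0norm p \<Omega> (g s) powr p \<partial>lebesgue_on {0<..<t}) powr (1 / p)"

definition in_CLq :: "real \<Rightarrow> real \<Rightarrow> 'a::euclidean_space set \<Rightarrow> (real \<Rightarrow> 'a \<Rightarrow> real) \<Rightarrow> bool" where
  "in_CLq q T \<Omega> w \<longleftrightarrow> (\<forall>t\<in>{0..T}. in_Lq q \<Omega> (w t)) \<and>
     (\<forall>t\<in>{0..T}. ((\<lambda>s. Lnorm q \<Omega> (\<lambda>x. w s x - w t x)) \<longlongrightarrow> 0) (at t within {0..T}))"

end

theory Submission
  imports Defs
begin

lemma Lnorm_nonneg: "Lnorm q \<Omega> f \<ge> 0"
  by (simp add: Lnorm_def)

lemma Lnorm_zero_AE: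
  assumes "q > 0" "in_Lq q \<Omega> f" "Lnorm q \<Omega> f = 0"
  shows "AE x in lebesgue_on \<Omega>. f x = 0"
proof -
  have I: "(\<integral>x. \<bar>f x\<bar> powr q \<partial>lebesgue_on \<Omega>) = 0"
    using assms(3) by (simp add: Lnorm_def)
  have "AE x in lebesgue_on \<Omega>. \<bar>f x\<bar> powr q = 0"
    using I assms(2) integral_nonneg_eq_0_iff_AE[of "lebesgue_on \<Omega>" "\<lambda>x. \<bar>f x\<bar> powr q"]
    by (simp add: in_Lq_def)
  then show ?thesis by eventually_elim simp
qed

lemma Lnorm_cong_AE:
  assumes "f \<in> borel_measurable (lebesgue_on \<Omega>)" "g \<in> borel_measurable (lebesgue_on \<Omega>)"
    "AE x in lebesgue_on \<Omega>. \<bar>f x\<bar> = \<bar>g x\<bar>"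
  shows "Lnorm q \<Omega> f = Lnorm q \<Omega> g"
proof -
  have "(\<integral>x. \<bar>f x\<bar> powr q \<partial>lebesgue_on \<Omega>) = (\<integral>x. \<bar>g x\<bar> powr q \<partial>lebesgue_on \<Omega>)"
    by (rule integral_cong_AE) (use assms in \<open>auto\<close>)
  then show ?thesis by (simp add: Lnorm_def)
qed

lemma AE_prod_zero:
  fixes \<Omega> :: "'a::euclidean_space set" and w :: "real \<Rightarrow> 'a \<Rightarrow> real" and T :: real
  assumes om: "open \<Omega>"
    and meas: "(\<lambda>z. w (fst z) (snd z)) \<in> borel_measurable (lebesgue_on ({0<..<T} \<times> \<Omega>))"
    and zero: "\<forall>s\<in>{0<..<T}. AE x in lebesgue_on \<Omega>. w s x = 0"
  shows "AE z in lebesgue_on ({0<..<T} \<times> \<Omega>). w (fst z) (snd z) = 0"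
proof -
  define Q where "Q = {0<..<T} \<times> \<Omega>"
  have Qo: "open Q" unfolding Q_def by (intro open_Times om) auto
  have Qm: "Q \<in> sets lebesgue" using Qo by (simp add: borel_open)
  have Om: "\<Omega> \<in> sets lebesgue" using om by (simp add: borel_open)
  define h where "h z = (if z \<in> Q then w (fst z) (snd z) else 0)" for z
  have hm: "h \<in> borel_measurable lebesgue"
    unfolding h_def using borel_measurable_if_I[OF meas[folded Q_def] Qm] by simp
  obtain h' where h'm: "h' \<in> borel_measurable lborel" and hh': "AE z in lborel. h z = h' z"
    using completion_ex_borel_measurable_real[OF hm] by blast
  have Pi: "pair_sigma_finite (lborel :: real measure) (lborel :: 'a measure)" ..
  have hh'2: "AE z in (lborel::real measure) \<Otimes>\<^sub>M (lborel::'a measure). h z = h' z"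
    unfolding lborel_prod by (rule hh')
  have A1: "AE s in lborel. AE x in lborel. h (s,x) = h' (s,x)"
    using pair_sigma_finite.AE_pair[OF Pi hh'2] by simp
  have A2: "AE x in lborel. h (s,x) = 0" for s
  proof (cases "s \<in> {0<..<T}")
    case True
    then have "AE x in lebesgue_on \<Omega>. w s x = 0" using zero by blast
    then have "AE x in lebesgue. x \<in> \<Omega> \<longrightarrow> w s x = 0"
      using Om by (simp add: AE_restrict_space_iff)
    then have "AE x in lborel. x \<in> \<Omega> \<longrightarrow> w s x = 0"
      by (simp add: AE_completion_iff)
    then show ?thesis by eventually_elim (auto simp: h_def Q_def)
  next
    case False
    then show ?thesis by (auto simp: h_def Q_def)
  qed
  have A3: "AE s in lborel. AE x in lborel. h' (s,x) = 0"
    using A1 proof eventually_elim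
    case (elim s)
    show ?case using elim A2[of s] by eventually_elim simp
  qed
  have "AE z in (lborel::real measure) \<Otimes>\<^sub>M (lborel::'a measure). h' z = 0"
  proof (rule pair_sigma_finite.AE_pair_measure[OF Pi _ A3])
    have "h' \<in> borel_measurable ((lborel::real measure) \<Otimes>\<^sub>M (lborel::'a measure))"
      unfolding lborel_prod by (rule h'm)
    then show "{x \<in> space (lborel \<Otimes>\<^sub>M lborel). h' x = 0} \<in> sets ((lborel::real measure) \<Otimes>\<^sub>M (lborel::'a measure))"
      by measurable
  qed
  then have "AE z in lborel. h' z = 0" unfolding lborel_prod .
  then have "AE z in lborel. h z = 0" using hh' by eventually_elim simp
  then have "AE z in lebesgue. h z = 0" by (simp add: AE_completion_iff)
  then have "AE z in lebesgue. z \<in> Q \<longrightarrow> w (fst z) (snd z) = 0"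
    by eventually_elim (auto simp: h_def split: if_splits)
  then show ?thesis unfolding Q_def[symmetric] using Qm by (simp add: AE_restrict_space_iff)
qed

theorem lemma3p3:
  fixes \<Omega> :: "'a::euclidean_space set"
    and w :: "real \<Rightarrow> 'a \<Rightarrow> real" and g :: "real \<Rightarrow> 'a \<Rightarrow> 'a"
    and T p \<sigma> c\<^sub>0 \<eta> m :: real
  assumes "open \<Omega>" and "bounded \<Omega>" and "T > 0" and "p > 1" and "\<sigma> \<ge> 1"
    and "in_LpW0 p T \<Omega> w g" and "in_CLq \<sigma> T \<Omega> w"
    and "Lnorm \<sigma> \<Omega> (w 0) = 0"
    and "c\<^sub>0 > 0" and "\<eta> > 0" and "m \<ge> p"
    and "\<forall>t\<in>{0<..T}.
      (SUP s\<in>{0<..<t}. Lnorm \<sigma> \<Omega> (w s) powr \<sigma>) + LpW0norm p t \<Omega> g powr p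
        \<le> c\<^sub>0 * (SUP s\<in>{0<..<t}. Lnorm \<sigma> \<Omega> (w s)) powr \<eta> * LpW0norm p t \<Omega> g powr m"
  shows "AE z in lebesgue_on ({0<..<T} \<times> \<Omega>). w (fst z) (snd z) = 0"
proof -
  note om = assms(1) and T0 = assms(3) and p1 = assms(4) and s1 = assms(5)
  note LpW = assms(6)[unfolded in_LpW0_def] and CL = assms(7)[unfolded in_CLq_def]
  note c0 = assms(9) and eta = assms(10) and mp = assms(11) and hyp = assms(12)
  define L where "L s = Lnorm \<sigma> \<Omega> (w s)" for s
  define Z where "Z t = LpW0norm p t \<Omega> g" for t
  define f where "f = (\<lambda>s. W0norm p \<Omega> (g s) powr p)"
  have L0: "L 0 = 0" using assms(8) by (simp add: L_def)
  have Lnn: "L s \<ge> 0" for s by (simp add: L_def Lnorm_nonneg)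
  have Lq: "in_Lq \<sigma> \<Omega> (w s)" if "s \<in> {0..T}" for s using CL that by blast
  have cont: "((\<lambda>s. Lnorm \<sigma> \<Omega> (\<lambda>x. w s x - w t x)) \<longlongrightarrow> 0) (at t within {0..T})"
    if "t \<in> {0..T}" for t using CL that by blast
  have wzero: "AE x in lebesgue_on \<Omega>. w t x = 0" if "t \<in> {0..T}" "L t = 0" for t
    using Lnorm_zero_AE[of \<sigma> \<Omega> "w t"] Lq[OF that(1)] that(2) s1 by (simp add: L_def)
  have F4: "Lnorm \<sigma> \<Omega> (\<lambda>x. w s x - w t x) = L s"
    if "t \<in> {0..T}" "L t = 0" "s \<in> {0..T}" for s t
    unfolding L_def
  proof (rule Lnorm_cong_AE)
    show "w s \<in> borel_measurable (lebesgue_on \<Omega>)" using Lq[OF that(3)] by (simp add: in_Lq_def)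
    moreover have "w t \<in> borel_measurable (lebesgue_on \<Omega>)" using Lq[OF that(1)] by (simp add: in_Lq_def)
    ultimately show "(\<lambda>x. w s x - w t x) \<in> borel_measurable (lebesgue_on \<Omega>)" by measurable
    show "AE x in lebesgue_on \<Omega>. \<bar>w s x - w t x\<bar> = \<bar>w s x\<bar>"
      using wzero[OF that(1,2)] by eventually_elim simp
  qed
  have F5: "Lnorm \<sigma> \<Omega> (\<lambda>x. w s x - w t x) = L t"
    if "s \<in> {0..T}" "L s = 0" "t \<in> {0..T}" for s t
    unfolding L_def
  proof (rule Lnorm_cong_AE)
    show "w t \<in> borel_measurable (lebesgue_on \<Omega>)" using Lq[OF that(3)] by (simp add: in_Lq_def)
    moreover have "w s \<in> borel_measurable (lebesgue_on \<Omega>)" using Lq[OF that(1)] by (simp add: in_Lq_def)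
    ultimately show "(\<lambda>x. w s x - w t x) \<in> borel_measurable (lebesgue_on \<Omega>)" by measurable
    show "AE x in lebesgue_on \<Omega>. \<bar>w s x - w t x\<bar> = \<bar>w t x\<bar>"
      using wzero[OF that(1,2)] by eventually_elim simp
  qed
  have Znn: "Z t \<ge> 0" for t by (simp add: Z_def LpW0norm_def)
  have fint: "integrable (lebesgue_on {0<..<T}) f" using LpW by (simp add: f_def)
  have Zmono: "Z t \<le> Z T" if "t \<in> {0<..T}" for t
  proof -
    have "(\<integral>s. f s \<partial>lebesgue_on {0<..<t}) \<le> (\<integral>s. f s \<partial>lebesgue_on {0<..<T})"
      by (rule integral_mono_lebesgue_on_AE[OF fint]) (use that in \<open>auto simp: f_def\<close>)
    moreover have "0 \<le> (\<integral>s. f s \<partial>lebesgue_on {0<..<t})"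
      unfolding f_def by (intro integral_nonneg_AE AE_I2) simp
    ultimately show ?thesis unfolding Z_def LpW0norm_def f_def
      by (intro powr_mono2) (use p1 in auto)
  qed
  define K where "K = (Z T + 1) powr (m - p)"
  have K0: "K > 0" unfolding K_def using Znn[of T] by simp
  define \<epsilon> where "\<epsilon> = (1 / (2 * c\<^sub>0 * K)) powr (1 / \<eta>)"
  have eps0: "\<epsilon> > 0" unfolding \<epsilon>_def using K0 c0 by simp
  have epseta: "\<epsilon> powr \<eta> = 1 / (2 * c\<^sub>0 * K)"
    unfolding \<epsilon>_def using K0 c0 eta by (simp add: powr_powr)
  have step: "\<exists>t1. t0 < t1 \<and> t1 \<le> T \<and> (\<forall>s\<in>{0..t1}. L s = 0)"
    if t0: "t0 \<in> {0..<T}" and IH: "\<forall>s\<in>{0..t0}. L s = 0" for t0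
  proof -
    have t0T: "t0 \<in> {0..T}" using t0 by auto
    have ev: "\<forall>\<^sub>F s in at t0 within {0..T}. Lnorm \<sigma> \<Omega> (\<lambda>x. w s x - w t0 x) = L s"
      using F4[OF t0T] IH t0 by (auto simp: eventually_at_filter intro!: always_eventually)
    have Lt: "(L \<longlongrightarrow> 0) (at t0 within {0..T})"
      using tendsto_cong[OF ev] cont[OF t0T] by simp
    have "\<forall>\<^sub>F s in at t0 within {0..T}. L s < \<epsilon>"
      using order_tendstoD(2)[OF Lt eps0] .
    then obtain \<delta> where d0: "\<delta> > 0" and dd: "\<And>s. s \<in> {0..T} \<Longrightarrow> s \<noteq> t0 \<Longrightarrow> dist s t0 < \<delta> \<Longrightarrow> L s < \<epsilon>"
      unfolding eventually_at by blast
    define d where "d = min \<delta> (T - t0)"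
    have d0': "d > 0" using d0 t0 by (simp add: d_def)
    define t where "t = t0 + d / 2"
    have dT: "d \<le> T - t0" "d \<le> \<delta>" by (auto simp: d_def)
    have tT: "t \<in> {0<..T}" using t0 d0' dT by (auto simp: t_def)
    have small: "L s \<le> \<epsilon>" if "s \<in> {0<..<t}" for s
    proof (cases "s \<le> t0")
      case True then show ?thesis using IH that eps0 by auto
    next
      case False
      then have "s \<in> {0..T}" "s \<noteq> t0" "dist s t0 < \<delta>"
        using that t0 d0' dT by (auto simp: t_def dist_real_def)
      then show ?thesis using dd by fastforce
    qed
    have H: "(SUP s\<in>{0<..<t}. L s powr \<sigma>) + Z t powr p \<le> c\<^sub>0 * (SUP s\<in>{0<..<t}. L s) powr \<eta> * Z t powr m"
      using hyp tT by (simp add: L_def Z_def)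
    have ne: "{0<..<t} \<noteq> {}" using tT by auto
    have t2: "t / 2 \<in> {0<..<t}" using tT by auto
    have bdd1: "bdd_above (L ` {0<..<t})" by (rule bdd_aboveI2[where M = \<epsilon>]) (rule small)
    have bdd2: "bdd_above ((\<lambda>s. L s powr \<sigma>) ` {0<..<t})"
      by (rule bdd_aboveI2[where M = "\<epsilon> powr \<sigma>"]) (intro powr_mono2, use s1 Lnn small in auto)
    define Y where "Y = (SUP s\<in>{0<..<t}. L s)"
    define A where "A = (SUP s\<in>{0<..<t}. L s powr \<sigma>)"
    have Yle: "Y \<le> \<epsilon>" unfolding Y_def by (rule cSUP_least[OF ne small])
    have Y0: "0 \<le> Y" unfolding Y_def using cSUP_upper[OF t2 bdd1] Lnn[of "t/2"] by linarith
    have Age: "L s powr \<sigma> \<le> A" if "s \<in> {0<..<t}" for s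
      unfolding A_def using cSUP_upper[OF that bdd2] .
    have A0: "0 \<le> A" using Age[OF t2] by (meson order_trans powr_ge_zero)
    have H': "A + Z t powr p \<le> c\<^sub>0 * Y powr \<eta> * Z t powr m" using H by (simp add: A_def Y_def)
    have Zt0: "Z t = 0"
    proof (rule ccontr)
      assume "Z t \<noteq> 0"
      then have Zp: "Z t > 0" using Znn[of t] by simp
      define P where "P = Z t powr p"
      define R where "R = Z t powr (m - p)"
      have P0: "P > 0" using Zp by (simp add: P_def)
      have R0: "R \<ge> 0" by (simp add: R_def)
      have Zm: "Z t powr m = P * R" unfolding P_def R_def by (simp flip: powr_add)
      have RK: "R \<le> K" unfolding R_def K_def
        using Zmono[OF tT] Znn[of t] mp by (intro powr_mono2) auto
      have Ye: "Y powr \<eta> \<le> 1 / (2 * c\<^sub>0 * K)"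
        using powr_mono2[of \<eta> Y \<epsilon>] Y0 Yle eta epseta by simp
      have a: "c\<^sub>0 * Y powr \<eta> \<le> 1 / (2 * K)"
        using mult_left_mono[OF Ye, of c\<^sub>0] c0 K0 by (simp add: field_simps)
      have b: "P * R \<le> P * K" using mult_left_mono[OF RK, of P] P0 by simp
      have "c\<^sub>0 * Y powr \<eta> * (P * R) \<le> 1 / (2 * K) * (P * K)"
        by (rule mult_mono[OF a b]) (use K0 P0 R0 in auto)
      also have "\<dots> = P / 2" using K0 by (simp add: field_simps)
      finally have "c\<^sub>0 * Y powr \<eta> * Z t powr m \<le> P / 2" by (simp add: Zm mult.assoc)
      then have "A + P \<le> P / 2" using H' by (simp add: P_def)
      then show False using A0 P0 by linarith
    qed
    have "A \<le> 0" using H' Zt0 by simp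
    then have Lz: "L s = 0" if "s \<in> {0<..<t}" for s
      using Age[OF that] Lnn[of s] by (metis antisym powr_eq_0_iff powr_ge_zero order_trans)
    show ?thesis
    proof (intro exI conjI)
      show "t0 < t0 + d / 4" using d0' by simp
      show "t0 + d / 4 \<le> T" using d0' t0 dT by auto
      show "\<forall>s\<in>{0..t0 + d / 4}. L s = 0"
      proof
        fix s assume s: "s \<in> {0..t0 + d / 4}"
        show "L s = 0"
        proof (cases "s = 0")
          case True then show ?thesis using L0 by simp
        next
          case False then show ?thesis using s d0' t0 by (intro Lz) (auto simp: t_def)
        qed
      qed
    qed
  qed
  define S where "S = {t\<in>{0..T}. \<forall>s\<in>{0..t}. L s = 0}"
  have S0: "0 \<in> S" using T0 L0 by (simp add: S_def)
  have Sne: "S \<noteq> {}" using S0 by blast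
  have Sbdd: "bdd_above S" by (rule bdd_aboveI[where M = T]) (auto simp: S_def)
  define ts where "ts = Sup S"
  have ts0: "0 \<le> ts" unfolding ts_def using cSup_upper[OF S0 Sbdd] .
  have tsT: "ts \<le> T" unfolding ts_def by (rule cSup_least[OF Sne]) (auto simp: S_def)
  have below: "L s = 0" if sts: "s \<in> {0..<ts}" for s
  proof -
    have "s < Sup S" using sts by (simp add: ts_def)
    then obtain x where "x \<in> S" "s < x" using less_cSupD[OF Sne, of s] by blast
    then show ?thesis using sts by (auto simp: S_def)
  qed
  have Lts: "L ts = 0"
  proof (cases "ts = 0")
    case True then show ?thesis using L0 by simp
  next
    case False
    then have tsp: "ts > 0" using ts0 by simp
    show ?thesis
    proof (rule ccontr)
      assume "L ts \<noteq> 0"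
      then have Lp: "L ts > 0" using Lnn[of ts] by simp
      have tsI: "ts \<in> {0..T}" using ts0 tsT by simp
      have "\<forall>\<^sub>F s in at ts within {0..T}. Lnorm \<sigma> \<Omega> (\<lambda>x. w s x - w ts x) < L ts"
        using order_tendstoD(2)[OF cont[OF tsI] Lp] .
      then obtain \<delta> where d0: "\<delta> > 0" and dd: "\<And>s. s \<in> {0..T} \<Longrightarrow> s \<noteq> ts \<Longrightarrow> dist s ts < \<delta> \<Longrightarrow>
          Lnorm \<sigma> \<Omega> (\<lambda>x. w s x - w ts x) < L ts"
        unfolding eventually_at by blast
      define s where "s = max 0 (ts - \<delta> / 2)"
      have sI: "s \<in> {0..<ts}" using tsp d0 by (auto simp: s_def)
      have sT: "s \<in> {0..T}" using sI tsT by auto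
      have "dist s ts < \<delta>" using sI d0 by (auto simp: s_def dist_real_def)
      then have "Lnorm \<sigma> \<Omega> (\<lambda>x. w s x - w ts x) < L ts" using dd[OF sT] sI by auto
      moreover have "Lnorm \<sigma> \<Omega> (\<lambda>x. w s x - w ts x) = L ts"
        using F5[OF sT below[OF sI] tsI] .
      ultimately show False by simp
    qed
  qed
  have tsS: "ts \<in> S" unfolding S_def
  proof (intro CollectI conjI ballI)
    show "ts \<in> {0..T}" using ts0 tsT by simp
    fix s assume "s \<in> {0..ts}"
    then show "L s = 0" using below[of s] Lts by (cases "s = ts") auto
  qed
  have tsT': "ts = T"
  proof (rule ccontr)
    assume "ts \<noteq> T"
    then have "ts \<in> {0..<T}" using ts0 tsT by simp
    then obtain t1 where "ts < t1" "t1 \<le> T" "\<forall>s\<in>{0..t1}. L s = 0"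
      using step[of ts] tsS by (auto simp: S_def)
    then have "t1 \<in> S" using \<open>ts < t1\<close> ts0 by (auto simp: S_def)
    then have "t1 \<le> ts" unfolding ts_def using cSup_upper[OF _ Sbdd] by blast
    then show False using \<open>ts < t1\<close> by simp
  qed
  have allz: "\<forall>s\<in>{0<..<T}. AE x in lebesgue_on \<Omega>. w s x = 0"
  proof
    fix s :: real assume s: "s \<in> {0<..<T}"
    then have "s \<in> {0..T}" by auto
    moreover have "L s = 0" using tsS tsT' s by (auto simp: S_def)
    ultimately show "AE x in lebesgue_on \<Omega>. w s x = 0" using wzero by blast
  qed
  show ?thesis using AE_prod_zero[OF om _ allz] LpW by blast
qed

end
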